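(* Let $A$ be a finite-dimensional associative algebra over $K=\mathbb{R}$ or $\mathbb{C}$, let $\{\cdot,\cdot\}$ be a quadratic pre-Poisson bracket on $A$ (not necessarily compatible with the multiplication), let $\delta\colon\mathrm{Symm}(A\otimes A)\to A\wedge A\subset A\otimes A$ be the dual of the map $\delta^*\colon A^*\wedge A^*\to\mathrm{Sym}^2(A^* )$ encoding the bracket, and let $\tilde\delta\colon A\otimes A\to A\otimes A$ be an arbitrary linear extension of $\delta$. Then for every fully symmetric tensor $X\in A\otimes A\otimes A$ the value $[[\tilde\delta,\tilde\delta]](X)$ depends only on $\delta$ (not on the chosen extension), and the bracket satisfies the Jacobi identity if and only if $[[\tilde\delta,\tilde\delta]](X)=0$ for every fully symmetric $X\in A\otimes A\otimes A$.
   Context: A pre-Poisson bracket on $A$ is a bilinear skew-symmetric map on $C^\infty(A)$ satisfying the Leibniz rule; it is quadratic if the bracket of two linear functions (elements of $A^*$) is a homogeneous quadratic function (element of $\mathrm{Sym}^2(A^* )$); it is then encoded by $\delta^*(\xi\wedge\eta)=\{\xi,\eta\}$, and $\delta$ is the dual map under the natural identifications of $\mathrm{Symm}(A\otimes A)$ with $(\mathrm{Sym}^2A^* )^*$ and $A\wedge A$ with $(A^*\wedge A^* )^*$. For a linear operator $P$ on $V\otimes V$, $P^{12}$ denotes the operator on $V\otimes V\otimes V$ acting as $P$ on the first two factors and as the identity on the third; $P^{13},P^{23}$ are defined similarly. The Schouten bracket is the operator $[[P,P]]=[P^{12},P^{13}]+[P^{12},P^{23}]+[P^{13},P^{23}]$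 on $V^{\otimes3}$, where $[\cdot,\cdot]$ is the commutator of operators. *)

theory Defs
  imports Complex_Main
begin

text \<open>Coordinates: the algebra A is K^n with basis e_i indexed by a finite type 'n.
  Elements of A: 'n => 'k; of A (x) A: 'n * 'n => 'k; of A (x) A (x) A: 'n * 'n * 'n => 'k.\<close>

definition assoc_alg :: "('n::finite \<Rightarrow> 'n \<Rightarrow> 'n \<Rightarrow> 'k::comm_ring_1) \<Rightarrow> bool" where
  "assoc_alg mu \<longleftrightarrow> (\<forall>i j k q. (\<Sum>p\<in>UNIV. mu i j p * mu p k q) = (\<Sum>p\<in>UNIV. mu j k p * mu i p q))"

definition op_apply :: "('n::finite \<times> 'n \<Rightarrow> 'n \<times> 'n \<Rightarrow> 'k::comm_ring_1) \<Rightarrow> ('n \<times> 'n \<Rightarrow> 'k) \<Rightarrow> ('n \<times> 'n \<Rightarrow> 'k)" where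
  "op_apply P t = (\<lambda>p. \<Sum>q\<in>UNIV. P p q * t q)"

definition sym2 :: "('n \<times> 'n \<Rightarrow> 'k) \<Rightarrow> bool" where
  "sym2 t \<longleftrightarrow> (\<forall>i j. t (i, j) = t (j, i))"

definition sym3 :: "('n \<times> 'n \<times> 'n \<Rightarrow> 'k) \<Rightarrow> bool" where
  "sym3 X \<longleftrightarrow> (\<forall>i j k. X (i, j, k) = X (j, i, k) \<and> X (i, j, k) = X (i, k, j) \<and> X (i, j, k) = X (k, j, i)
                        \<and> X (i, j, k) = X (j, k, i) \<and> X (i, j, k) = X (k, i, j))"

definition P12 :: "('n::finite \<times> 'n \<Rightarrow> 'n \<times> 'n \<Rightarrow> 'k::comm_ring_1) \<Rightarrow> ('n \<times> 'n \<times> 'n \<Rightarrow> 'k) \<Rightarrow> ('n \<times> 'n \<times> 'n \<Rightarrow> 'k)" where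
  "P12 P X = (\<lambda>(i, j, m). \<Sum>(k, l)\<in>UNIV. P (i, j) (k, l) * X (k, l, m))"

definition P13 :: "('n::finite \<times> 'n \<Rightarrow> 'n \<times> 'n \<Rightarrow> 'k::comm_ring_1) \<Rightarrow> ('n \<times> 'n \<times> 'n \<Rightarrow> 'k) \<Rightarrow> ('n \<times> 'n \<times> 'n \<Rightarrow> 'k)" where
  "P13 P X = (\<lambda>(i, j, m). \<Sum>(k, l)\<in>UNIV. P (i, m) (k, l) * X (k, j, l))"

definition P23 :: "('n::finite \<times> 'n \<Rightarrow> 'n \<times> 'n \<Rightarrow> 'k::comm_ring_1) \<Rightarrow> ('n \<times> 'n \<times> 'n \<Rightarrow> 'k) \<Rightarrow> ('n \<times> 'n \<times> 'n \<Rightarrow> 'k)" where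
  "P23 P X = (\<lambda>(i, j, m). \<Sum>(k, l)\<in>UNIV. P (j, m) (k, l) * X (i, k, l))"

definition op_comm :: "(('a \<Rightarrow> 'k::ab_group_add) \<Rightarrow> ('a \<Rightarrow> 'k)) \<Rightarrow> (('a \<Rightarrow> 'k) \<Rightarrow> ('a \<Rightarrow> 'k)) \<Rightarrow> ('a \<Rightarrow> 'k) \<Rightarrow> ('a \<Rightarrow> 'k)" where
  "op_comm F G X = (\<lambda>x. F (G X) x - G (F X) x)"

definition schouten :: "('n::finite \<times> 'n \<Rightarrow> 'n \<times> 'n \<Rightarrow> 'k::comm_ring_1) \<Rightarrow> ('n \<times> 'n \<times> 'n \<Rightarrow> 'k) \<Rightarrow> ('n \<times> 'n \<times> 'n \<Rightarrow> 'k)" where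
  "schouten P X = (\<lambda>x. op_comm (P12 P) (P13 P) X x + op_comm (P12 P) (P23 P) X x + op_comm (P13 P) (P23 P) X x)"

text \<open>Quadratic pre-Poisson bracket: {x_i, x_j}(v) = sum_{k,l} c i j k l * v_k * v_l,
  with c symmetric in k l (unique symmetric coefficient form) and skew in i j.\<close>
definition quad_prePoisson :: "('n::finite \<Rightarrow> 'n \<Rightarrow> 'n \<Rightarrow> 'n \<Rightarrow> 'k::comm_ring_1) \<Rightarrow> bool" where
  "quad_prePoisson c \<longleftrightarrow> (\<forall>i j k l. c i j k l = c i j l k) \<and> (\<forall>i j k l. c j i k l = - c i j k l)"

definition br_lin :: "('n::finite \<Rightarrow> 'n \<Rightarrow> 'n \<Rightarrow> 'n \<Rightarrow> 'k::comm_ring_1) \<Rightarrow> 'n \<Rightarrow> 'n \<Rightarrow> ('n \<Rightarrow> 'k) \<Rightarrow> 'k" where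
  "br_lin c i j v = (\<Sum>k\<in>UNIV. \<Sum>l\<in>UNIV. c i j k l * v k * v l)"

text \<open>{x_a, {x_b, x_d}}(v), computed with the Leibniz rule
  {x_a, x_k x_l} = {x_a, x_k} x_l + x_k {x_a, x_l}.\<close>
definition br_nested :: "('n::finite \<Rightarrow> 'n \<Rightarrow> 'n \<Rightarrow> 'n \<Rightarrow> 'k::comm_ring_1) \<Rightarrow> 'n \<Rightarrow> 'n \<Rightarrow> 'n \<Rightarrow> ('n \<Rightarrow> 'k) \<Rightarrow> 'k" where
  "br_nested c a b d v = (\<Sum>k\<in>UNIV. \<Sum>l\<in>UNIV. c b d k l * (br_lin c a k v * v l + v k * br_lin c a l v))"

definition jacobi :: "('n::finite \<Rightarrow> 'n \<Rightarrow> 'n \<Rightarrow> 'n \<Rightarrow> 'k::comm_ring_1) \<Rightarrow> bool" where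
  "jacobi c \<longleftrightarrow> (\<forall>a b d v. br_nested c a b d v + br_nested c b d a v + br_nested c d a b v = 0)"

text \<open>delta : Symm(A (x) A) -> A /\ A, dual of delta^*(x_i /\ x_j) = {x_i, x_j}.\<close>
definition delta :: "('n::finite \<Rightarrow> 'n \<Rightarrow> 'n \<Rightarrow> 'n \<Rightarrow> 'k::comm_ring_1) \<Rightarrow> ('n \<times> 'n \<Rightarrow> 'k) \<Rightarrow> ('n \<times> 'n \<Rightarrow> 'k)" where
  "delta c t = (\<lambda>(i, j). \<Sum>k\<in>UNIV. \<Sum>l\<in>UNIV. c i j k l * t (k, l))"

definition extends_delta :: "('n::finite \<Rightarrow> 'n \<Rightarrow> 'n \<Rightarrow> 'n \<Rightarrow> 'k::comm_ring_1) \<Rightarrow> ('n \<times> 'n \<Rightarrow> 'n \<times> 'n \<Rightarrow> 'k) \<Rightarrow> bool" where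
  "extends_delta c D \<longleftrightarrow> (\<forall>t. sym2 t \<longrightarrow> op_apply D t = delta c t)"

end

theory Submission
  imports Defs
begin

lemma psum: "(\<Sum>(k,l)\<in>(UNIV::('n::finite\<times>'n) set). f k l) = (\<Sum>k\<in>UNIV. \<Sum>l\<in>UNIV. f k l)"
  by (simp add: sum.cartesian_product UNIV_Times_UNIV)

definition Cm :: "('n::finite \<Rightarrow> 'n \<Rightarrow> 'n \<Rightarrow> 'n \<Rightarrow> 'k::comm_ring_1) \<Rightarrow> ('n \<times> 'n \<Rightarrow> 'n \<times> 'n \<Rightarrow> 'k)" where
  "Cm c p q = c (fst p) (snd p) (fst q) (snd q)"

lemma Cm_ext: "extends_delta c (Cm c)"
  unfolding extends_delta_def op_apply_def delta_def Cm_def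
  by (auto simp: fun_eq_iff psum[symmetric] split_def)

lemma P12_op: "P12 D Y (i,j,m) = op_apply D (\<lambda>(k,l). Y(k,l,m)) (i,j)"
  by (simp add: P12_def op_apply_def split_def)
lemma P13_op: "P13 D Y (i,j,m) = op_apply D (\<lambda>(k,l). Y(k,j,l)) (i,m)"
  by (simp add: P13_def op_apply_def split_def)
lemma P23_op: "P23 D Y (i,j,m) = op_apply D (\<lambda>(k,l). Y(i,k,l)) (j,m)"
  by (simp add: P23_def op_apply_def split_def)

lemma P12_add: "P12 D (\<lambda>x. Y x + Z x) = (\<lambda>x. P12 D Y x + P12 D Z x)"
  by (auto simp: fun_eq_iff P12_def distrib_left sum.distrib split_def)
lemma P13_diff: "P13 D (\<lambda>x. Y x - Z x) = (\<lambda>x. P13 D Y x - P13 D Z x)"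
  by (auto simp: fun_eq_iff P13_def right_diff_distrib sum_subtractf split_def)
lemma P23_add: "P23 D (\<lambda>x. Y x + Z x) = (\<lambda>x. P23 D Y x + P23 D Z x)"
  by (auto simp: fun_eq_iff P23_def distrib_left sum.distrib split_def)

lemma ext_eq: "extends_delta c D \<Longrightarrow> extends_delta c D' \<Longrightarrow> sym2 t \<Longrightarrow> op_apply D t = op_apply D' t"
  by (simp add: extends_delta_def)


lemma P12_eq: assumes "extends_delta c D" "extends_delta c D'" "\<And>a b m. Y(a,b,m) = Y(b,a,m)"
  shows "P12 D Y = P12 D' Y"
proof -
  have "P12 D Y (i,j,m) = P12 D' Y (i,j,m)" for i j m
    unfolding P12_op by (rule arg_cong[where f="\<lambda>f. f (i,j)"], rule ext_eq[OF assms(1,2)]) (simp add: sym2_def assms(3))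
  thus ?thesis by (auto simp: fun_eq_iff)
qed
lemma P13_eq: assumes "extends_delta c D" "extends_delta c D'" "\<And>a b m. Y(a,m,b) = Y(b,m,a)"
  shows "P13 D Y = P13 D' Y"
proof -
  have "P13 D Y (i,j,m) = P13 D' Y (i,j,m)" for i j m
    unfolding P13_op by (rule arg_cong[where f="\<lambda>f. f (i,m)"], rule ext_eq[OF assms(1,2)]) (simp add: sym2_def assms(3))
  thus ?thesis by (auto simp: fun_eq_iff)
qed
lemma P23_eq: assumes "extends_delta c D" "extends_delta c D'" "\<And>a b m. Y(m,a,b) = Y(m,b,a)"
  shows "P23 D Y = P23 D' Y"
proof -
  have "P23 D Y (i,j,m) = P23 D' Y (i,j,m)" for i j m
    unfolding P23_op by (rule arg_cong[where f="\<lambda>f. f (j,m)"], rule ext_eq[OF assms(1,2)]) (simp add: sym2_def assms(3))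
  thus ?thesis by (auto simp: fun_eq_iff)
qed

lemma schouten_split:
  assumes "P12 D X = A" "P13 D X = B" "P23 D X = E"
  shows "schouten D X = (\<lambda>x. P12 D (\<lambda>y. B y + E y) x - P13 D (\<lambda>y. A y - E y) x - P23 D (\<lambda>y. A y + B y) x)"
  unfolding schouten_def op_comm_def assms P12_add P13_diff P23_add
  by (simp add: fun_eq_iff algebra_simps)

lemma part1:
  assumes D: "extends_delta c D" and q: "quad_prePoisson c" and X: "sym3 X"
  shows "schouten D X = schouten (Cm c) X"
proof -
  note C = Cm_ext[of c]
  have x12: "X(i,j,k) = X(j,i,k)" for i j k
    using X[unfolded sym3_def, rule_format, of i j k] by (rule conjunct1)
  have x23: "X(i,j,k) = X(i,k,j)" for i j k
    using X[unfolded sym3_def, rule_format, of i j k] by (elim conjE)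
  have x13: "X(i,j,k) = X(k,j,i)" for i j k
    using X[unfolded sym3_def, rule_format, of i j k] by (elim conjE)
  have sk: "c j i k l = - c i j k l" for i j k l
    using q[unfolded quad_prePoisson_def] by (elim conjE allE)
  define A where "A = P12 (Cm c) X"
  define B where "B = P13 (Cm c) X"
  define E where "E = P23 (Cm c) X"
  have a: "P12 D X = A" unfolding A_def by (rule P12_eq[OF D C]) (rule x12)
  have b: "P13 D X = B" unfolding B_def by (rule P13_eq[OF D C]) (rule x13)
  have e: "P23 D X = E" unfolding E_def by (rule P23_eq[OF D C]) (rule x23)
  have s1: "B (a,b,m) + E (a,b,m) = B (b,a,m) + E (b,a,m)" for a b m
  proof -
    have "B (a,b,m) = E (b,a,m)" unfolding B_def E_def P13_def P23_def Cm_def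
      by (simp add: split_def, intro sum.cong refl) (clarsimp, metis x12)
    moreover have "E (a,b,m) = B (b,a,m)" unfolding B_def E_def P13_def P23_def Cm_def
      by (simp add: split_def, intro sum.cong refl) (clarsimp, metis x12)
    ultimately show ?thesis by simp
  qed
  have s2: "A (a,m,b) - E (a,m,b) = A (b,m,a) - E (b,m,a)" for a b m
  proof -
    have "A (a,m,b) = - E (b,m,a)" unfolding A_def E_def P12_def P23_def Cm_def
      by (simp add: split_def sum_negf[symmetric], intro sum.cong refl) (clarsimp, metis x12 x23 sk mult_minus_left)
    moreover have "E (a,m,b) = - A (b,m,a)" unfolding A_def E_def P12_def P23_def Cm_def
      by (simp add: split_def sum_negf[symmetric], intro sum.cong refl) (clarsimp, metis x12 x23 sk mult_minus_left)
    ultimately show ?thesis by simp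
  qed
  have s3: "A (m,a,b) + B (m,a,b) = A (m,b,a) + B (m,b,a)" for a b m
  proof -
    have "A (m,a,b) = B (m,b,a)" unfolding B_def A_def P13_def P12_def Cm_def
      by (simp add: split_def, intro sum.cong refl) (clarsimp, metis x12 x23)
    moreover have "B (m,a,b) = A (m,b,a)" unfolding B_def A_def P13_def P12_def Cm_def
      by (simp add: split_def, intro sum.cong refl) (clarsimp, metis x12 x23)
    ultimately show ?thesis by simp
  qed
  have e1: "P12 D (\<lambda>y. B y + E y) = P12 (Cm c) (\<lambda>y. B y + E y)"
    by (rule P12_eq[OF D C]) (rule s1)
  have e2: "P13 D (\<lambda>y. A y - E y) = P13 (Cm c) (\<lambda>y. A y - E y)"
    by (rule P13_eq[OF D C]) (rule s2)
  have e3: "P23 D (\<lambda>y. A y + B y) = P23 (Cm c) (\<lambda>y. A y + B y)"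
    by (rule P23_eq[OF D C]) (rule s3)
  show ?thesis
    unfolding schouten_split[OF a b e] schouten_split[OF A_def[symmetric] B_def[symmetric] E_def[symmetric]]
      e1 e2 e3 ..
qed


lemma P12C: "P12 (Cm c) Y (i,j,m) = (\<Sum>k\<in>UNIV. \<Sum>l\<in>UNIV. c i j k l * Y(k,l,m))"
  by (simp add: P12_def Cm_def psum[symmetric] split_def)
lemma P13C: "P13 (Cm c) Y (i,j,m) = (\<Sum>k\<in>UNIV. \<Sum>l\<in>UNIV. c i m k l * Y(k,j,l))"
  by (simp add: P13_def Cm_def psum[symmetric] split_def)
lemma P23C: "P23 (Cm c) Y (i,j,m) = (\<Sum>k\<in>UNIV. \<Sum>l\<in>UNIV. c j m k l * Y(i,k,l))"
  by (simp add: P23_def Cm_def psum[symmetric] split_def)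

definition Q :: "('n::finite \<Rightarrow> 'n \<Rightarrow> 'n \<Rightarrow> 'n \<Rightarrow> 'k::comm_ring_1) \<Rightarrow> ('n \<times> 'n \<times> 'n \<Rightarrow> 'k) \<Rightarrow> 'n \<Rightarrow> 'n \<Rightarrow> 'n \<Rightarrow> 'k" where
  "Q c X x y z = (\<Sum>k\<in>UNIV. \<Sum>l\<in>UNIV. \<Sum>p\<in>UNIV. \<Sum>q\<in>UNIV. c x y k l * c k z p q * X(p,q,l))"

lemma schC:
  fixes c :: "'n::finite \<Rightarrow> 'n \<Rightarrow> 'n \<Rightarrow> 'n \<Rightarrow> 'k::comm_ring_1"
  assumes cs: "\<And>i j k l. c i j k l = c i j l k" and sk: "\<And>i j k l. c j i k l = - c i j k l"
    and x12: "\<And>i j k. X(i,j,k) = X(j,i,k)" and x23: "\<And>i j k. X(i,j,k) = X(i,k,j)"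
    and x13: "\<And>i j k. X(i,j,k) = X(k,j,i)"
  shows "schouten (Cm c) X (i,j,m) = 2 * (Q c X i j m + Q c X j m i + Q c X m i j)"
proof -
  have Qs: "Q c X x y z = - Q c X y x z" for x y z
    unfolding Q_def sum_negf[symmetric] by (intro sum.cong refl) (simp add: sk[of y x])
  have T1: "P12 (Cm c) (P13 (Cm c) X) (i,j,m) = Q c X i j m"
    unfolding P12C P13C Q_def sum_distrib_left by (intro sum.cong refl) (simp only: mult.assoc mult_minus_left mult_minus_right, (metis x23)?)
  have T2: "P13 (Cm c) (P12 (Cm c) X) (i,j,m) = Q c X i m j"
    unfolding P12C P13C Q_def sum_distrib_left by (intro sum.cong refl) (simp only: mult.assoc mult_minus_left mult_minus_right, (metis )?)
  have T3: "P12 (Cm c) (P23 (Cm c) X) (i,j,m) = Q c X i j m"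
    unfolding P12C P23C Q_def sum_distrib_left
    apply (rule trans[OF sum.swap])
    by (intro sum.cong refl) (simp only: mult.assoc mult_minus_left mult_minus_right, (metis x12 x13 cs)?)
  have T4: "P23 (Cm c) (P12 (Cm c) X) (i,j,m) = - Q c X j m i"
    unfolding P12C P23C Q_def sum_distrib_left sum_negf[symmetric]
    by (intro sum.cong refl) (simp add: sk[of _ i])
  have T5: "P13 (Cm c) (P23 (Cm c) X) (i,j,m) = - Q c X i m j"
    unfolding P13C P23C Q_def sum_distrib_left sum_negf[symmetric]
    apply (rule trans[OF sum.swap])
    by (intro sum.cong refl) (simp add: sk[of _ j] mult.assoc, (metis x12 x23 cs)?)
  have T6: "P23 (Cm c) (P13 (Cm c) X) (i,j,m) = - Q c X j m i"
    unfolding P13C P23C Q_def sum_distrib_left sum_negf[symmetric]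
    apply (rule trans[OF sum.swap])
    by (intro sum.cong refl) (simp add: sk[of _ i] mult.assoc, (metis x12 x23 cs)?)
  show ?thesis
    unfolding schouten_def op_comm_def using T1 T2 T3 T4 T5 T6 Qs[of i m j]
    by (simp add: algebra_simps)
qed


lemma br_nested_Q:
  fixes c :: "'n::finite \<Rightarrow> 'n \<Rightarrow> 'n \<Rightarrow> 'n \<Rightarrow> 'k::comm_ring_1"
  assumes cs: "\<And>i j k l. c i j k l = c i j l k" and sk: "\<And>i j k l. c j i k l = - c i j k l"
  shows "br_nested c a b d v = - 2 * Q c (\<lambda>(p,q,l). v p * v q * v l) b d a"
proof -
  have h1: "(\<Sum>k\<in>UNIV. \<Sum>l\<in>UNIV. c b d k l * (v k * br_lin c a l v))
      = (\<Sum>k\<in>UNIV. \<Sum>l\<in>UNIV. c b d k l * (br_lin c a k v * v l))"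
    apply (rule trans[OF sum.swap])
    by (intro sum.cong refl) (simp add: cs[of b d] mult_ac)
  have "br_nested c a b d v = 2 * (\<Sum>k\<in>UNIV. \<Sum>l\<in>UNIV. c b d k l * (br_lin c a k v * v l))"
    unfolding br_nested_def distrib_left sum.distrib h1 by simp
  also have "\<dots> = - 2 * Q c (\<lambda>(p,q,l). v p * v q * v l) b d a"
    unfolding Q_def br_lin_def sum_distrib_left sum_distrib_right sum_negf[symmetric]
    by (intro sum.cong refl) (simp add: sk[of _ a] mult_ac)
  finally show ?thesis .
qed

lemma reord:
  "(\<Sum>k\<in>(UNIV::'n::finite set). \<Sum>l\<in>UNIV. \<Sum>p\<in>UNIV. \<Sum>q\<in>UNIV. f k l p q)
   = (\<Sum>p\<in>UNIV. \<Sum>q\<in>UNIV. \<Sum>l\<in>UNIV. \<Sum>k\<in>UNIV. (f k l p q :: 'k::comm_monoid_add))"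
proof -
  have "(\<Sum>k\<in>(UNIV::'n set). \<Sum>l\<in>UNIV. \<Sum>p\<in>UNIV. \<Sum>q\<in>UNIV. f k l p q)
      = (\<Sum>k\<in>UNIV. \<Sum>p\<in>UNIV. \<Sum>l\<in>UNIV. \<Sum>q\<in>UNIV. f k l p q)"
    by (rule sum.cong[OF refl], rule sum.swap)
  also have "\<dots> = (\<Sum>k\<in>UNIV. \<Sum>p\<in>UNIV. \<Sum>q\<in>UNIV. \<Sum>l\<in>UNIV. f k l p q)"
    by (rule sum.cong[OF refl], rule sum.cong[OF refl], rule sum.swap)
  also have "\<dots> = (\<Sum>p\<in>UNIV. \<Sum>k\<in>UNIV. \<Sum>q\<in>UNIV. \<Sum>l\<in>UNIV. f k l p q)"
    by (rule sum.swap)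
  also have "\<dots> = (\<Sum>p\<in>UNIV. \<Sum>q\<in>UNIV. \<Sum>k\<in>UNIV. \<Sum>l\<in>UNIV. f k l p q)"
    by (rule sum.cong[OF refl], rule sum.swap)
  also have "\<dots> = (\<Sum>p\<in>UNIV. \<Sum>q\<in>UNIV. \<Sum>l\<in>UNIV. \<Sum>k\<in>UNIV. f k l p q)"
    by (rule sum.cong[OF refl], rule sum.cong[OF refl], rule sum.swap)
  finally show ?thesis .
qed

definition lin3 :: "('n::finite \<Rightarrow> 'n \<Rightarrow> 'n \<Rightarrow> 'k::comm_ring_1) \<Rightarrow> ('n \<times> 'n \<times> 'n \<Rightarrow> 'k) \<Rightarrow> 'k" where
  "lin3 W X = (\<Sum>p\<in>UNIV. \<Sum>q\<in>UNIV. \<Sum>r\<in>UNIV. W p q r * X(p,q,r))"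

lemma Q_lin3: "Q c X x y z = lin3 (\<lambda>p q r. \<Sum>k\<in>UNIV. c x y k r * c k z p q) X"
  unfolding Q_def lin3_def sum_distrib_right by (rule reord)

lemma lin3_add: "lin3 (\<lambda>a b d. W1 a b d + W2 a b d) X = lin3 W1 X + lin3 W2 X"
  unfolding lin3_def distrib_right sum.distrib ..

lemma lin3_smult: "lin3 (\<lambda>a b d. s * W a b d) X = s * lin3 W X"
  unfolding lin3_def sum_distrib_left by (intro sum.cong refl) (simp add: mult.assoc)

lemma lin3_t12: assumes x12: "\<And>i j k. X(i,j,k) = X(j,i,k)"
  shows "lin3 (\<lambda>a b d. W b a d) X = lin3 W X"
  unfolding lin3_def
  apply (rule trans[OF sum.swap])
  by (intro sum.cong refl) (metis x12)

lemma lin3_t23: assumes x23: "\<And>i j k. X(i,j,k) = X(i,k,j)"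
  shows "lin3 (\<lambda>a b d. W a d b) X = lin3 W X"
  unfolding lin3_def
  apply (rule sum.cong[OF refl])
  apply (rule trans[OF sum.swap])
  by (intro sum.cong refl) (metis x23)


lemma delta_sum: "(\<Sum>r\<in>(UNIV::'n::finite set). f r * (if r = d then 1 else (0::'k::comm_ring_1))) = f d"
proof -
  have "(\<Sum>r\<in>(UNIV::'n set). f r * (if r = d then 1 else (0::'k))) = (\<Sum>r\<in>UNIV. (if r = d then f r else 0))"
    by (rule sum.cong) auto
  thus ?thesis by simp
qed

lemma polar:
  fixes W :: "'n::finite \<Rightarrow> 'n \<Rightarrow> 'n \<Rightarrow> 'k::field_char_0"
  assumes h: "\<And>v. lin3 W (\<lambda>(p,q,r). v p * v q * v r) = 0"
    and x12: "\<And>i j k. X(i,j,k) = X(j,i,k)" and x23: "\<And>i j k. X(i,j,k) = X(i,k,j)"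
  shows "lin3 W X = 0"
proof -
  define g where "g = (\<lambda>x y z. \<Sum>p\<in>UNIV. \<Sum>q\<in>UNIV. \<Sum>r\<in>UNIV. W p q r * (x p * y q * (z r::'k)))"
  have g1: "g (\<lambda>i. x i + x' i) y z = g x y z + g x' y z" for x x' y z
    unfolding g_def by (simp add: distrib_left distrib_right sum.distrib)
  have g2: "g x (\<lambda>i. y i + y' i) z = g x y z + g x y' z" for x y y' z
    unfolding g_def by (simp add: distrib_left distrib_right sum.distrib)
  have g3: "g x y (\<lambda>i. z i + z' i) = g x y z + g x y z'" for x y z z'
    unfolding g_def by (simp add: distrib_left distrib_right sum.distrib)
  have F: "g v v v = 0" for v using h[of v] unfolding lin3_def g_def by simp
  have expand: "g (\<lambda>i. x i + y i + z i) (\<lambda>i. x i + y i + z i) (\<lambda>i. x i + y i + z i)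
     - g (\<lambda>i. x i + y i) (\<lambda>i. x i + y i) (\<lambda>i. x i + y i)
     - g (\<lambda>i. x i + z i) (\<lambda>i. x i + z i) (\<lambda>i. x i + z i)
     - g (\<lambda>i. y i + z i) (\<lambda>i. y i + z i) (\<lambda>i. y i + z i)
     + g x x x + g y y y + g z z z
     = g x y z + g x z y + g y x z + g y z x + g z x y + g z y x" for x y z
    by (simp add: g1 g2 g3 algebra_simps)
  have pol: "g x y z + g x z y + g y x z + g y z x + g z x y + g z y x = 0" for x y z
    using expand[of x y z] by (simp add: F)
  define e where "e a = (\<lambda>i. if i = a then (1::'k) else 0)" for a :: 'n
  have ge: "g (e a) (e b) (e d) = W a b d" for a b d
    unfolding g_def e_def by (simp only: mult.assoc[symmetric] delta_sum)
  have Ws: "W a b d + W a d b + W b a d + W b d a + W d a b + W d b a = 0" for a b d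
    using pol[of "e a" "e b" "e d"] by (simp add: ge)
  have t1: "lin3 (\<lambda>a b d. W a d b) X = lin3 W X" by (rule lin3_t23[where X=X, OF x23])
  have t2: "lin3 (\<lambda>a b d. W b a d) X = lin3 W X" by (rule lin3_t12[where X=X, OF x12])
  have t3: "lin3 (\<lambda>a b d. W b d a) X = lin3 W X"
    using lin3_t12[where X=X, OF x12, of "\<lambda>a b d. W a d b"] t1 by simp
  have t4: "lin3 (\<lambda>a b d. W d a b) X = lin3 W X"
    using lin3_t23[where X=X, OF x23, of "\<lambda>a b d. W b a d"] t2 by simp
  have t5: "lin3 (\<lambda>a b d. W d b a) X = lin3 W X"
    using lin3_t12[where X=X, OF x12, of "\<lambda>a b d. W d a b"] t4 by simp
  have "lin3 (\<lambda>a b d. W a b d + W a d b + W b a d + W b d a + W d a b + W d b a) X = 6 * lin3 W X"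
    unfolding lin3_add t1 t2 t3 t4 t5 by simp
  moreover have "lin3 (\<lambda>a b d. W a b d + W a d b + W b a d + W b d a + W d a b + W d b a) X = 0"
    unfolding Ws by (simp add: lin3_def)
  ultimately show ?thesis by simp
qed


lemma sym3_facts:
  assumes X: "sym3 X"
  shows "X(i,j,k) = X(j,i,k)" "X(i,j,k) = X(i,k,j)" "X(i,j,k) = X(k,j,i)"
proof -
  note h = X[unfolded sym3_def, rule_format, of i j k]
  show "X(i,j,k) = X(j,i,k)" using h by (elim conjE)
  show "X(i,j,k) = X(i,k,j)" using h by (elim conjE)
  show "X(i,j,k) = X(k,j,i)" using h by (elim conjE)
qed

definition Wt :: "('n::finite \<Rightarrow> 'n \<Rightarrow> 'n \<Rightarrow> 'n \<Rightarrow> 'k::comm_ring_1) \<Rightarrow> 'n \<Rightarrow> 'n \<Rightarrow> 'n \<Rightarrow> 'n \<Rightarrow> 'n \<Rightarrow> 'n \<Rightarrow> 'k" where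
  "Wt c i j m = (\<lambda>p q r. 2 * ((\<Sum>k\<in>UNIV. c i j k r * c k m p q) + (\<Sum>k\<in>UNIV. c j m k r * c k i p q)
      + (\<Sum>k\<in>UNIV. c m i k r * c k j p q)))"

lemma schC_lin:
  fixes c :: "'n::finite \<Rightarrow> 'n \<Rightarrow> 'n \<Rightarrow> 'n \<Rightarrow> 'k::comm_ring_1"
  assumes cs: "\<And>i j k l. c i j k l = c i j l k" and sk: "\<And>i j k l. c j i k l = - c i j k l"
    and X: "sym3 X"
  shows "schouten (Cm c) X (i,j,m) = lin3 (Wt c i j m) X"
  unfolding schC[where c=c and X=X, OF cs sk sym3_facts[OF X]] Wt_def lin3_smult lin3_add Q_lin3 ..

theorem theorem2:
  fixes mu :: "'n::finite \<Rightarrow> 'n \<Rightarrow> 'n \<Rightarrow> 'k::real_normed_field"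
    and c :: "'n \<Rightarrow> 'n \<Rightarrow> 'n \<Rightarrow> 'n \<Rightarrow> 'k"
  assumes "assoc_alg mu"
    and "quad_prePoisson c"
  shows "(\<forall>D1 D2. extends_delta c D1 \<and> extends_delta c D2 \<longrightarrow>
            (\<forall>X. sym3 X \<longrightarrow> schouten D1 X = schouten D2 X))
       \<and> (\<forall>D. extends_delta c D \<longrightarrow>
            (jacobi c \<longleftrightarrow> (\<forall>X. sym3 X \<longrightarrow> schouten D X = (\<lambda>_. 0))))"
proof -
  note q = assms(2)
  have cs: "c i j k l = c i j l k" for i j k l
    using q[unfolded quad_prePoisson_def] by (elim conjE allE)
  have sk: "c j i k l = - c i j k l" for i j k l
    using q[unfolded quad_prePoisson_def] by (elim conjE allE)
  define V where "V v = (\<lambda>(p,q,l). v p * v q * v (l::'n))" for v :: "'n \<Rightarrow> 'k"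
  have symV: "sym3 (V v)" for v unfolding sym3_def V_def by (simp add: mult_ac)
  have jac_eq: "br_nested c a b d v + br_nested c b d a v + br_nested c d a b v
      = - schouten (Cm c) (V v) (a,b,d)" for a b d v
    unfolding br_nested_Q[OF cs sk] schC[where c=c and X="V v", OF cs sk sym3_facts[OF symV]] V_def[symmetric]
    by (simp add: algebra_simps)
  have main: "jacobi c \<longleftrightarrow> (\<forall>X. sym3 X \<longrightarrow> schouten (Cm c) X = (\<lambda>_. 0))"
  proof
    assume J: "jacobi c"
    show "\<forall>X. sym3 X \<longrightarrow> schouten (Cm c) X = (\<lambda>_. 0)"
    proof (intro allI impI ext)
      fix X :: "'n \<times> 'n \<times> 'n \<Rightarrow> 'k" and x :: "'n \<times> 'n \<times> 'n" assume X: "sym3 X"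
      obtain i j m where x: "x = (i,j,m)" by (cases x) auto
      have "lin3 (Wt c i j m) X = 0"
      proof (rule polar[where X=X, OF _ sym3_facts(1,2)[OF X]])
        fix v
        have "lin3 (Wt c i j m) (\<lambda>(p,q,r). v p * v q * v r) = schouten (Cm c) (V v) (i,j,m)"
          using schC_lin[OF cs sk symV[of v]] unfolding V_def by simp
        also have "\<dots> = 0" using jac_eq[of i j m v] J unfolding jacobi_def by simp
        finally show "lin3 (Wt c i j m) (\<lambda>(p,q,r). v p * v q * v r) = 0" .
      qed
      thus "schouten (Cm c) X x = 0" unfolding x schC_lin[OF cs sk X] .
    qed
  next
    assume S: "\<forall>X. sym3 X \<longrightarrow> schouten (Cm c) X = (\<lambda>_. 0)"
    show "jacobi c" unfolding jacobi_def
    proof (intro allI)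
      fix a b d v
      show "br_nested c a b d v + br_nested c b d a v + br_nested c d a b v = 0"
        unfolding jac_eq using S symV[of v] by simp
    qed
  qed
  show ?thesis
  proof (intro conjI allI impI)
    fix D1 D2 and X :: "'n \<times> 'n \<times> 'n \<Rightarrow> 'k" assume "extends_delta c D1 \<and> extends_delta c D2" "sym3 X"
    thus "schouten D1 X = schouten D2 X" using part1[OF _ q] by metis
  next
    fix D assume D: "extends_delta c D"
    have "(\<forall>X. sym3 X \<longrightarrow> schouten D X = (\<lambda>_. 0)) \<longleftrightarrow> (\<forall>X. sym3 X \<longrightarrow> schouten (Cm c) X = (\<lambda>_. 0))"
      using part1[OF D q] by auto
    thus "jacobi c \<longleftrightarrow> (\<forall>X. sym3 X \<longrightarrow> schouten D X = (\<lambda>_. 0))" using main by simp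
  qed
qed

end
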